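(* Fix $\tau\in\mathbb N$, $d\in(1,2]$, $m\in[1,\infty)$. Let $S=\{x_0,x_1,\dots,x_\tau\}$ (distinct points) with the metric $\rho(x,y)=1$ if $x\ne y$ and $x_0\in\{x,y\}$, $\rho(x,y)=d$ for distinct $x,y\in\{x_1,\dots,x_\tau\}$, and the measure $\mu(\{x_0\})=1$, $\mu(\{x_i\})=m$ for $i\in\{1,\dots,\tau\}$; let $\mathfrak S=(S,\rho,\mu)$. Then, with implicit constants independent of $\tau,d,m,\kappa$ (depending at most on $p$), $$\mathfrak c_{\mathfrak S}(\kappa,p)\simeq\mathfrak c^{\rm c}_{\mathfrak S}(\kappa,p)\simeq\begin{cases}\max\{1,\tau^{1/p}m^{1/p-1}\}& \kappa\in[1,d),\ p\in[1,\infty),\\ 1&\kappa\in[d,\infty)\text{ or }p=\infty.\end{cases}$$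
   Context: For $\kappa\ge1$: $\mathcal M^{\rm c}_{\kappa}f(x)=\sup_{s>0}\mu(B(x,\kappa s))^{-1}\int_{B(x,s)}|f|d\mu$ and $\mathcal M_\kappa f(x)=\sup\{\mu(B(y,\kappa s))^{-1}\int_{B(y,s)}|f|d\mu: y\in X, s>0, x\in B(y,s)\}$, where $B(y,s)$ are open balls. $\mathfrak c^{\rm c}_{\mathfrak X}(\kappa,p)$ (respectively $\mathfrak c_{\mathfrak X}(\kappa,p)$) is the best constant $C$ in $\sup_{\lambda>0}\lambda\mu(\{|Tf|>\lambda\})^{1/p}\le C\|f\|_p$ for $T=\mathcal M^{\rm c}_\kappa$ (respectively $T=\mathcal M_\kappa$), $p<\infty$, and the $L^\infty$ operator norm for $p=\infty$. *)

theory Defs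
  imports Complex_Main "HOL-Library.Extended_Real"
begin

definition fball :: "'a set \<Rightarrow> ('a \<Rightarrow> 'a \<Rightarrow> real) \<Rightarrow> 'a \<Rightarrow> real \<Rightarrow> 'a set" where
  "fball S \<rho> y s = {x \<in> S. \<rho> y x < s}"

definition fmeas :: "('a \<Rightarrow> real) \<Rightarrow> 'a set \<Rightarrow> real" where
  "fmeas w A = (\<Sum>x\<in>A. w x)"

definition ball_avg :: "'a set \<Rightarrow> ('a \<Rightarrow> 'a \<Rightarrow> real) \<Rightarrow> ('a \<Rightarrow> real) \<Rightarrow> real
    \<Rightarrow> ('a \<Rightarrow> real) \<Rightarrow> 'a \<Rightarrow> real \<Rightarrow> real" where
  "ball_avg S \<rho> w \<kappa> f y s =
     (\<Sum>z\<in>fball S \<rho> y s. \<bar>f z\<bar> * w z) / fmeas w (fball S \<rho> y (\<kappa> * s))"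

definition cmax :: "'a set \<Rightarrow> ('a \<Rightarrow> 'a \<Rightarrow> real) \<Rightarrow> ('a \<Rightarrow> real) \<Rightarrow> real
    \<Rightarrow> ('a \<Rightarrow> real) \<Rightarrow> 'a \<Rightarrow> real" where
  "cmax S \<rho> w \<kappa> f x = (SUP s\<in>{0<..}. ball_avg S \<rho> w \<kappa> f x s)"

definition umax :: "'a set \<Rightarrow> ('a \<Rightarrow> 'a \<Rightarrow> real) \<Rightarrow> ('a \<Rightarrow> real) \<Rightarrow> real
    \<Rightarrow> ('a \<Rightarrow> real) \<Rightarrow> 'a \<Rightarrow> real" where
  "umax S \<rho> w \<kappa> f x =
     Sup {ball_avg S \<rho> w \<kappa> f y s | y s. y \<in> S \<and> 0 < s \<and> x \<in> fball S \<rho> y s}"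

definition lp_norm :: "'a set \<Rightarrow> ('a \<Rightarrow> real) \<Rightarrow> real \<Rightarrow> ('a \<Rightarrow> real) \<Rightarrow> real" where
  "lp_norm S w p f = (\<Sum>x\<in>S. \<bar>f x\<bar> powr p * w x) powr (1 / p)"

text \<open>L-infinity norm (all points have positive mass, so ess sup = max).\<close>
definition linf_norm :: "'a set \<Rightarrow> ('a \<Rightarrow> real) \<Rightarrow> real" where
  "linf_norm S f = Max ((\<lambda>x. \<bar>f x\<bar>) ` S)"

definition weak_norm :: "'a set \<Rightarrow> ('a \<Rightarrow> real) \<Rightarrow> real \<Rightarrow> ('a \<Rightarrow> real) \<Rightarrow> real" where
  "weak_norm S w p g = (SUP t\<in>{0<..}. t * fmeas w {x \<in> S. \<bar>g x\<bar> > t} powr (1 / p))"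

definition best_const :: "'a set \<Rightarrow> ('a \<Rightarrow> real) \<Rightarrow> (('a \<Rightarrow> real) \<Rightarrow> 'a \<Rightarrow> real)
    \<Rightarrow> ereal \<Rightarrow> real" where
  "best_const S w T p =
     (if p = \<infinity> then Inf {C. 0 \<le> C \<and> (\<forall>f. linf_norm S (T f) \<le> C * linf_norm S f)}
      else Inf {C. 0 \<le> C \<and> (\<forall>f. weak_norm S w (real_of_ereal p) (T f)
                                  \<le> C * lp_norm S w (real_of_ereal p) f)})"

text \<open>The space: points 0..tau (x_0 = 0), metric and measure as in the paper.\<close>
definition Sdist :: "real \<Rightarrow> nat \<Rightarrow> nat \<Rightarrow> real" where
  "Sdist d x y = (if x = y then 0 else if x = 0 \<or> y = 0 then 1 else d)"

definition Smass :: "real \<Rightarrow> nat \<Rightarrow> real" where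
  "Smass m x = (if x = 0 then 1 else m)"

definition Sc :: "nat \<Rightarrow> real \<Rightarrow> real \<Rightarrow> real \<Rightarrow> ereal \<Rightarrow> real" where
  "Sc \<tau> d m \<kappa> p = best_const {0..\<tau>} (Smass m) (umax {0..\<tau>} (Sdist d) (Smass m) \<kappa>) p"

definition Scc :: "nat \<Rightarrow> real \<Rightarrow> real \<Rightarrow> real \<Rightarrow> ereal \<Rightarrow> real" where
  "Scc \<tau> d m \<kappa> p = best_const {0..\<tau>} (Smass m) (cmax {0..\<tau>} (Sdist d) (Smass m) \<kappa>) p"

definition Sbound :: "nat \<Rightarrow> real \<Rightarrow> real \<Rightarrow> real \<Rightarrow> ereal \<Rightarrow> real" where
  "Sbound \<tau> d m \<kappa> p =
     (if p = \<infinity> \<or> d \<le> \<kappa> then 1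
      else max 1 (real \<tau> powr (1 / real_of_ereal p) * m powr (1 / real_of_ereal p - 1)))"

end

theory Submission imports Defs begin

lemma Smass_pos: "1 \<le> m \<Longrightarrow> 0 < Smass m x" by (simp add: Smass_def)
lemma Smass_ge1: "1 \<le> m \<Longrightarrow> 1 \<le> Smass m x" by (simp add: Smass_def)

lemma fmeas_mono: "1 \<le> m \<Longrightarrow> finite D \<Longrightarrow> B \<subseteq> D \<Longrightarrow> fmeas (Smass m) B \<le> fmeas (Smass m) D"
  unfolding fmeas_def by (rule sum_mono2) (auto simp: Smass_def)

lemma fmeas_pos: "1 \<le> m \<Longrightarrow> finite B \<Longrightarrow> B \<noteq> {} \<Longrightarrow> 0 < fmeas (Smass m) B"
  unfolding fmeas_def by (rule sum_pos) (auto simp: Smass_def)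

lemma ball_eq:
  assumes "y \<le> \<tau>" "0 < s" "1 < d"
  shows "fball {0..\<tau>} (Sdist d) y s = (if s \<le> 1 then {y} else if y = 0 \<or> d < s then {0..\<tau>} else {0,y})"
  using assms unfolding fball_def Sdist_def by auto
definition Av :: "nat \<Rightarrow> real \<Rightarrow> (nat \<Rightarrow> real) \<Rightarrow> real" where
  "Av \<tau> m f = (\<Sum>z\<in>{0..\<tau>}. \<bar>f z\<bar> * Smass m z) / fmeas (Smass m) {0..\<tau>}"

definition Gb :: "nat \<Rightarrow> real \<Rightarrow> real \<Rightarrow> real \<Rightarrow> (nat \<Rightarrow> real) \<Rightarrow> nat \<Rightarrow> real" where
  "Gb \<tau> d m \<kappa> f x = \<bar>f x\<bar> + Av \<tau> m f + (if x = 0 then linf_norm {0..\<tau>} f else 0)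
     + (if x \<noteq> 0 \<and> \<kappa> < d then \<bar>f 0\<bar> / (1 + m) else 0)"

lemma linf_ge: "(z::nat) \<le> \<tau> \<Longrightarrow> \<bar>f z\<bar> \<le> linf_norm {0..\<tau>} f"
  unfolding linf_norm_def by (rule Max_ge) auto

lemma linf_nonneg: "0 \<le> linf_norm {0..(\<tau>::nat)} f"
  using linf_ge[of 0 \<tau> f] by (smt (verit) abs_ge_zero le0)

lemma Av_nonneg: "1 \<le> m \<Longrightarrow> 0 \<le> Av \<tau> m f"
  unfolding Av_def using fmeas_pos[of m "{0..\<tau>}"]
  by (intro divide_nonneg_nonneg sum_nonneg) (auto simp: Smass_def)

lemma Gb_ge: "1 \<le> m \<Longrightarrow> \<bar>f x\<bar> + Av \<tau> m f + (if x = 0 then linf_norm {0..\<tau>} f else 0)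
     + (if x \<noteq> 0 \<and> \<kappa> < d then \<bar>f 0\<bar> / (1 + m) else 0) = Gb \<tau> d m \<kappa> f x"
  by (simp add: Gb_def)

lemma Gb_ge_abs_Av:
  assumes "1 \<le> m" shows "\<bar>f x\<bar> + Av \<tau> m f \<le> Gb \<tau> d m \<kappa> f x"
proof -
  have "0 \<le> (if x = 0 then linf_norm {0..\<tau>} f else 0)" using linf_nonneg by simp
  moreover have "0 \<le> (if x \<noteq> 0 \<and> \<kappa> < d then \<bar>f 0\<bar> / (1 + m) else 0)" using assms by simp
  ultimately show ?thesis unfolding Gb_def by linarith
qed

lemma ball_avg_nonneg: "1 \<le> m \<Longrightarrow> 0 \<le> ball_avg S \<rho> (Smass m) \<kappa> f y s"
  unfolding ball_avg_def fmeas_def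
  by (intro divide_nonneg_nonneg sum_nonneg) (auto simp: Smass_def)

lemma avg_bound:
  assumes m1: "1 \<le> m" and d1: "1 < d" and k1: "1 \<le> \<kappa>"
    and y: "y \<le> \<tau>" and s: "0 < s" and x: "x \<in> fball {0..\<tau>} (Sdist d) y s"
  shows "ball_avg {0..\<tau>} (Sdist d) (Smass m) \<kappa> f y s \<le> Gb \<tau> d m \<kappa> f x"
proof -
  let ?S = "{0..\<tau>}" let ?w = "Smass m"
  define B where "B = fball ?S (Sdist d) y s"
  define D where "D = fball ?S (Sdist d) y (\<kappa>*s)"
  have avg: "ball_avg ?S (Sdist d) ?w \<kappa> f y s = (\<Sum>z\<in>B. \<bar>f z\<bar> * ?w z) / fmeas ?w D"
    by (simp add: ball_avg_def B_def D_def)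
  have L0: "0 \<le> linf_norm ?S f" by (rule linf_nonneg)
  have A0: "0 \<le> Av \<tau> m f" using m1 by (rule Av_nonneg)
  have G: "Gb \<tau> d m \<kappa> f x = \<bar>f x\<bar> + Av \<tau> m f + (if x = 0 then linf_norm {0..\<tau>} f else 0)
     + (if x \<noteq> 0 \<and> \<kappa> < d then \<bar>f 0\<bar> / (1 + m) else 0)" by (simp add: Gb_def)
  have ks: "0 < \<kappa> * s" using k1 s by simp
  have xS: "x \<le> \<tau>" using x by (simp add: fball_def)
  show ?thesis
  proof (cases "s \<le> 1")
    case True
    then have B: "B = {y}" using ball_eq[OF y s d1] B_def by simp
    then have xy: "x = y" using x B_def by simp
    have "y \<in> D" using y ks by (simp add: D_def fball_def Sdist_def)
    then have "fmeas ?w {y} \<le> fmeas ?w D"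
      by (intro fmeas_mono m1) (auto simp: D_def fball_def)
    then have wy: "?w y \<le> fmeas ?w D" by (simp add: fmeas_def)
    have "0 < ?w y" using m1 by (rule Smass_pos)
    have "(\<Sum>z\<in>B. \<bar>f z\<bar> * ?w z) / fmeas ?w D = \<bar>f y\<bar> * ?w y / fmeas ?w D" by (simp add: B)
    also have "\<dots> \<le> \<bar>f y\<bar>"
      using wy \<open>0 < ?w y\<close> by (simp add: pos_divide_le_eq mult_left_mono)
    finally have c: "(\<Sum>z\<in>B. \<bar>f z\<bar> * ?w z) / fmeas ?w D \<le> \<bar>f y\<bar>" .
    moreover have "0 \<le> \<bar>f 0\<bar> / (1 + m)" using m1 by simp
    ultimately show ?thesis unfolding xy using avg A0 Gb_ge_abs_Av[OF m1, of f y \<tau> d \<kappa>] by linarith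
  next
    case False
    show ?thesis
    proof (cases "y = 0 \<or> d < \<kappa> * s")
      case True
      have "1 * s \<le> \<kappa> * s" using k1 s by (intro mult_right_mono) auto
      then have "1 < \<kappa> * s" using False by linarith
      then have D: "D = ?S" using ball_eq[OF y ks d1] True D_def by auto
      have BS: "B \<subseteq> ?S" by (auto simp: B_def fball_def)
      have "(\<Sum>z\<in>B. \<bar>f z\<bar> * ?w z) \<le> (\<Sum>z\<in>?S. \<bar>f z\<bar> * ?w z)"
        by (rule sum_mono2) (use BS m1 in \<open>auto simp: Smass_def\<close>)
      then have "(\<Sum>z\<in>B. \<bar>f z\<bar> * ?w z) / fmeas ?w D \<le> Av \<tau> m f"
        unfolding Av_def D using fmeas_pos[OF m1, of ?S]
        by (simp add: divide_right_mono)
      then show ?thesis using avg Gb_ge_abs_Av[OF m1, of f x \<tau> d \<kappa>] by (smt (verit) abs_ge_zero)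
    next
      case False2: False
      have y0: "y \<noteq> 0" and kd: "\<kappa> * s \<le> d" using False2 by auto
      have s1: "1 < s" using False by simp
      have "1 * s \<le> \<kappa> * s" using k1 s by (intro mult_right_mono) auto
      then have sd: "s \<le> d" and ks1: "\<not> \<kappa> * s \<le> 1" using kd s1 by linarith+
      have "\<kappa> * 1 < \<kappa> * s" using k1 s1 by (intro mult_strict_left_mono) auto
      then have kd2: "\<kappa> < d" using kd by simp
      have B: "B = {0, y}" using ball_eq[OF y s d1] B_def s1 sd y0 by auto
      have D: "D = {0, y}" using ball_eq[OF y ks d1] D_def ks1 kd y0 by auto
      have avg2: "(\<Sum>z\<in>B. \<bar>f z\<bar> * ?w z) / fmeas ?w D = (\<bar>f 0\<bar> + \<bar>f y\<bar> * m) / (1 + m)"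
        using y0 by (simp add: B D fmeas_def Smass_def)
      have x0y: "x = 0 \<or> x = y" using x B B_def by auto
      have fy: "\<bar>f y\<bar> \<le> linf_norm ?S f" using y by (rule linf_ge)
      show ?thesis
      proof (cases "x = 0")
        case True
        have "(\<bar>f 0\<bar> + \<bar>f y\<bar> * m) / (1 + m) \<le> \<bar>f 0\<bar> + \<bar>f y\<bar>"
          using m1 by (simp add: divide_le_eq algebra_simps add_increasing)
        then show ?thesis using avg avg2 G True fy A0 by auto
      next
        case False
        then have xy: "x = y" using x0y by simp
        have "(\<bar>f 0\<bar> + \<bar>f y\<bar> * m) / (1 + m) \<le> \<bar>f y\<bar> + \<bar>f 0\<bar> / (1 + m)"
          using m1 by (simp add: divide_le_eq add_divide_distrib algebra_simps)
        then show ?thesis using avg avg2 G False xy kd2 A0 by auto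
      qed
    qed
  qed
qed


lemma in_own_ball: "x \<le> \<tau> \<Longrightarrow> 0 < s \<Longrightarrow> x \<in> fball {0..\<tau>} (Sdist d) x s"
  by (simp add: fball_def Sdist_def)

lemma cmax_le:
  assumes m1: "1 \<le> m" and d1: "1 < d" and k1: "1 \<le> \<kappa>" and x: "x \<le> \<tau>"
  shows "cmax {0..\<tau>} (Sdist d) (Smass m) \<kappa> f x \<le> Gb \<tau> d m \<kappa> f x"
  unfolding cmax_def
  by (rule cSUP_least) (use avg_bound[OF m1 d1 k1 x] in_own_ball[OF x] in auto)

lemma cmax_ge:
  assumes m1: "1 \<le> m" and d1: "1 < d" and k1: "1 \<le> \<kappa>" and x: "x \<le> \<tau>" and s: "0 < s"
  shows "ball_avg {0..\<tau>} (Sdist d) (Smass m) \<kappa> f x s \<le> cmax {0..\<tau>} (Sdist d) (Smass m) \<kappa> f x"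
  unfolding cmax_def
proof (rule cSUP_upper)
  show "s \<in> {0<..}" using s by simp
  show "bdd_above ((\<lambda>s. ball_avg {0..\<tau>} (Sdist d) (Smass m) \<kappa> f x s) ` {0<..})"
    by (rule bdd_aboveI2[where M="Gb \<tau> d m \<kappa> f x"])
       (use avg_bound[OF m1 d1 k1 x] in_own_ball[OF x] in auto)
qed

lemma umax_le:
  assumes m1: "1 \<le> m" and d1: "1 < d" and k1: "1 \<le> \<kappa>" and x: "x \<le> \<tau>"
  shows "umax {0..\<tau>} (Sdist d) (Smass m) \<kappa> f x \<le> Gb \<tau> d m \<kappa> f x"
  unfolding umax_def
proof (rule cSup_least)
  show "{ball_avg {0..\<tau>} (Sdist d) (Smass m) \<kappa> f y s |y s.
      y \<in> {0..\<tau>} \<and> 0 < s \<and> x \<in> fball {0..\<tau>} (Sdist d) y s} \<noteq> {}"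
  proof -
    have "ball_avg {0..\<tau>} (Sdist d) (Smass m) \<kappa> f x 1 \<in> {ball_avg {0..\<tau>} (Sdist d) (Smass m) \<kappa> f y s |y s.
      y \<in> {0..\<tau>} \<and> 0 < s \<and> x \<in> fball {0..\<tau>} (Sdist d) y s}"
    proof -
      have "\<exists>y s. ball_avg {0..\<tau>} (Sdist d) (Smass m) \<kappa> f x 1 = ball_avg {0..\<tau>} (Sdist d) (Smass m) \<kappa> f y s \<and>
        y \<in> {0..\<tau>} \<and> 0 < s \<and> x \<in> fball {0..\<tau>} (Sdist d) y s"
        using in_own_ball[OF x, of 1 d] x by (intro exI[of _ x] exI[of _ "1::real"]) auto
      then show ?thesis by (simp only: mem_Collect_eq)
    qed
    then show ?thesis by (metis empty_iff)
  qed
next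
  fix v assume "v \<in> {ball_avg {0..\<tau>} (Sdist d) (Smass m) \<kappa> f y s |y s.
      y \<in> {0..\<tau>} \<and> 0 < s \<and> x \<in> fball {0..\<tau>} (Sdist d) y s}"
  then obtain y s where "v = ball_avg {0..\<tau>} (Sdist d) (Smass m) \<kappa> f y s" "y \<le> \<tau>" "0 < s"
    "x \<in> fball {0..\<tau>} (Sdist d) y s" by auto
  then show "v \<le> Gb \<tau> d m \<kappa> f x" using avg_bound[OF m1 d1 k1, of y \<tau> s x f] by simp
qed

lemma umax_ge:
  assumes m1: "1 \<le> m" and d1: "1 < d" and k1: "1 \<le> \<kappa>" and x: "x \<le> \<tau>" and s: "0 < s"
  shows "ball_avg {0..\<tau>} (Sdist d) (Smass m) \<kappa> f x s \<le> umax {0..\<tau>} (Sdist d) (Smass m) \<kappa> f x"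
  unfolding umax_def
proof (rule cSup_upper)
  show "ball_avg {0..\<tau>} (Sdist d) (Smass m) \<kappa> f x s \<in> {ball_avg {0..\<tau>} (Sdist d) (Smass m) \<kappa> f y s |y s.
      y \<in> {0..\<tau>} \<and> 0 < s \<and> x \<in> fball {0..\<tau>} (Sdist d) y s}"
    using in_own_ball[OF x s, of d] x s by auto
  show "bdd_above {ball_avg {0..\<tau>} (Sdist d) (Smass m) \<kappa> f y s |y s.
      y \<in> {0..\<tau>} \<and> 0 < s \<and> x \<in> fball {0..\<tau>} (Sdist d) y s}"
  proof (rule bdd_aboveI[where M="Gb \<tau> d m \<kappa> f x"])
    fix v assume "v \<in> {ball_avg {0..\<tau>} (Sdist d) (Smass m) \<kappa> f y s |y s.
      y \<in> {0..\<tau>} \<and> 0 < s \<and> x \<in> fball {0..\<tau>} (Sdist d) y s}"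
    then obtain y s where "v = ball_avg {0..\<tau>} (Sdist d) (Smass m) \<kappa> f y s" "y \<le> \<tau>" "0 < s"
      "x \<in> fball {0..\<tau>} (Sdist d) y s" by auto
    then show "v \<le> Gb \<tau> d m \<kappa> f x" using avg_bound[OF m1 d1 k1, of y \<tau> s x f] by simp
  qed
qed

lemma split_trick:
  fixes g wt :: "nat \<Rightarrow> real"
  assumes fin: "finite S" and g0: "\<And>x. x\<in>S \<Longrightarrow> 0 \<le> g x" and w0: "\<And>x. x\<in>S \<Longrightarrow> 0 \<le> wt x"
    and r1: "1 \<le> r" and c0: "0 < c"
    and gt: "2*c*(\<Sum>x\<in>S. wt x) < (\<Sum>x\<in>S. g x * wt x)"
  shows "(\<Sum>x\<in>S. wt x) \<le> (1/c) powr r * (\<Sum>x\<in>S. g x powr r * wt x)"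
proof -
  have pw: "g x \<le> c + c powr (1-r) * g x powr r" if "x\<in>S" for x
  proof (cases "g x \<le> c")
    case True
    have "0 \<le> c powr (1-r) * g x powr r" by simp
    then show ?thesis using True by linarith
  next
    case False
    then have gp: "0 < g x" using c0 by linarith
    have "c powr (r-1) \<le> g x powr (r-1)" using False c0 r1 by (intro powr_mono2) auto
    then have "g x * c powr (r-1) \<le> g x * g x powr (r-1)" using gp by simp
    also have "g x * g x powr (r-1) = g x powr r"
    proof -
      have "g x powr r = g x powr (1 + (r-1))" by simp
      also have "\<dots> = g x powr 1 * g x powr (r-1)" by (rule powr_add)
      finally show ?thesis using gp by simp
    qed
    finally have a: "g x * c powr (r-1) \<le> g x powr r" .
    have "c powr (1-r) * c powr (r-1) = c powr ((1-r) + (r-1))" by (rule powr_add[symmetric])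
    then have "c powr (1-r) * c powr (r-1) = 1" using c0 by simp
    then have "g x = c powr (1-r) * (g x * c powr (r-1))" by (simp add: algebra_simps)
    also have "\<dots> \<le> c powr (1-r) * g x powr r" using a by (intro mult_left_mono) auto
    finally show ?thesis using c0 by linarith
  qed
  have "(\<Sum>x\<in>S. g x * wt x) \<le> (\<Sum>x\<in>S. (c + c powr (1-r) * g x powr r) * wt x)"
    by (intro sum_mono mult_right_mono pw w0)
  also have "\<dots> = c * (\<Sum>x\<in>S. wt x) + c powr (1-r) * (\<Sum>x\<in>S. g x powr r * wt x)"
    by (simp add: sum.distrib sum_distrib_left algebra_simps)
  finally have "c * (\<Sum>x\<in>S. wt x) < c powr (1-r) * (\<Sum>x\<in>S. g x powr r * wt x)" using gt by linarith
  then have "(\<Sum>x\<in>S. wt x) < c powr (1-r) * (\<Sum>x\<in>S. g x powr r * wt x) / c"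
    using c0 by (simp add: less_divide_eq mult.commute)
  also have "c powr (1-r) * (\<Sum>x\<in>S. g x powr r * wt x) / c = (1/c) powr r * (\<Sum>x\<in>S. g x powr r * wt x)"
  proof -
    have "c powr (1-r) / c = c powr (1-r) / c powr 1" using c0 by simp
    also have "\<dots> = c powr ((1-r) - 1)" by (rule powr_diff[symmetric])
    also have "\<dots> = c powr (-r)" by simp
    also have "\<dots> = 1 / c powr r" by (rule powr_minus_divide)
    also have "\<dots> = (1/c) powr r" using c0 by (simp add: powr_divide)
    finally have e: "c powr (1-r) / c = (1/c) powr r" .
    have "c powr (1-r) * (\<Sum>x\<in>S. g x powr r * wt x) / c = (c powr (1-r) / c) * (\<Sum>x\<in>S. g x powr r * wt x)"
      by (rule times_divide_eq_left[symmetric])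
    then show ?thesis unfolding e .
  qed
  finally show ?thesis by simp
qed

lemma Sb_bound:
  assumes r1: "1 \<le> r" and m1: "1 \<le> m"
  shows "(3 + (if \<kappa> < d then real \<tau> * m powr (1-r) else 0)) powr (1/r) \<le> 4 * Sbound \<tau> d m \<kappa> (ereal r)"
proof (cases "\<kappa> < d")
  case False
  have "3 powr (1/r) \<le> (3::real) powr 1" using r1 by (intro powr_mono) auto
  then show ?thesis using False by (simp add: Sbound_def)
next
  case True
  define Y where "Y = real \<tau> * m powr (1-r)"
  have Y0: "0 \<le> Y" by (simp add: Y_def)
  have e0: "0 \<le> 1/r" using r1 by simp
  have "(3 + Y) powr (1/r) \<le> (4 * max 1 Y) powr (1/r)" using Y0 e0 by (intro powr_mono2) auto
  also have "\<dots> = 4 powr (1/r) * (max 1 Y) powr (1/r)" using Y0 by (simp add: powr_mult)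
  also have "\<dots> \<le> 4 * max 1 (Y powr (1/r))"
  proof (intro mult_mono)
    show "4 powr (1/r) \<le> (4::real)"
      using powr_mono[of "1/r" 1 4] r1 by simp
    show "max 1 Y powr (1/r) \<le> max 1 (Y powr (1/r))"
    proof (cases "Y \<le> 1")
      case True then show ?thesis by simp
    next
      case False then show ?thesis by simp
    qed
  qed auto
  also have "Y powr (1/r) = real \<tau> powr (1/r) * m powr (1/r - 1)"
  proof -
    have "Y powr (1/r) = real \<tau> powr (1/r) * m powr ((1-r) * (1/r))"
      using m1 by (simp add: Y_def powr_mult powr_powr)
    also have "(1-r) * (1/r) = 1/r - 1" using r1 by (simp add: field_simps)
    finally show ?thesis .
  qed
  finally show ?thesis using True by (simp add: Sbound_def Y_def)
qed


lemma four_cases: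
  fixes t a A L b :: real
  shows "0 < t \<Longrightarrow> t < a + A + (if P then L else 0) + (if Q then b else 0) \<Longrightarrow>
    t/4 < a \<or> t/4 < A \<or> (P \<and> t/4 < L) \<or> (Q \<and> t/4 < b)"
  by (auto split: if_splits)

lemma weak_t:
  assumes tau: "1 \<le> \<tau>" and m1: "1 \<le> m" and d1: "1 < d" and k1: "1 \<le> \<kappa>"
    and r1: "1 \<le> r" and t: "0 < t"
    and P1: "\<And>x. x \<le> \<tau> \<Longrightarrow> 0 \<le> T x"
    and P2: "\<And>x. x \<le> \<tau> \<Longrightarrow> T x \<le> Gb \<tau> d m \<kappa> f x"
  shows "t * fmeas (Smass m) {x\<in>{0..\<tau>}. t < \<bar>T x\<bar>} powr (1/r)
           \<le> 32 * Sbound \<tau> d m \<kappa> (ereal r) * lp_norm {0..\<tau>} (Smass m) r f"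
proof -
  let ?S = "{0..\<tau>}" let ?w = "Smass m"
  define u where "u = 8/t"
  define N where "N = (\<Sum>x\<in>?S. \<bar>f x\<bar> powr r * ?w x)"
  define Y where "Y = (if \<kappa> < d then real \<tau> * m powr (1-r) else 0)"
  define L where "L = linf_norm ?S f"
  define A where "A = Av \<tau> m f"
  have u0: "0 < u" using t by (simp add: u_def)
  have ut: "u * (t/4) = 2" using t by (simp add: u_def)
  have w0: "\<And>x. 0 < ?w x" using m1 by (simp add: Smass_pos)
  have N0: "0 \<le> N" unfolding N_def using w0 by (intro sum_nonneg) (simp add: less_imp_le)
  have Nge: "\<bar>f z\<bar> powr r * ?w z \<le> N" if "z \<le> \<tau>" for z
    unfolding N_def using that w0 by (intro member_le_sum) (auto simp: less_imp_le)
  have Y0: "0 \<le> Y" by (simp add: Y_def)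
  have key1: "?w z \<le> u powr r * (\<bar>f z\<bar> powr r * ?w z)" if "t/4 < \<bar>f z\<bar>" for z
  proof -
    have "u * (t/4) < u * \<bar>f z\<bar>" using that u0 by simp
    then have "1 \<le> u * \<bar>f z\<bar>" using ut by linarith
    then have "1 \<le> (u * \<bar>f z\<bar>) powr r" using r1 by (intro ge_one_powr_ge_zero) auto
    also have "\<dots> = u powr r * \<bar>f z\<bar> powr r" using u0 by (simp add: powr_mult)
    finally have "1 * ?w z \<le> (u powr r * \<bar>f z\<bar> powr r) * ?w z" using w0[of z]
      by (intro mult_right_mono) (auto simp: less_imp_le)
    then show ?thesis by (simp add: mult_ac)
  qed
  define I1 where "I1 x = ?w x * (u powr r * \<bar>f x\<bar> powr r)" for x
  define I2 where "I2 x = ?w x * (if t/4 < A then 1 else 0)" for x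
  define I3 where "I3 x = (if x = 0 then (if t/4 < L then 1 else (0::real)) else 0)" for x :: nat
  define c4 where "c4 = (if \<kappa> < d \<and> t/4 < \<bar>f 0\<bar>/(1+m) then m else 0)"
  define I4 where "I4 x = (if x = 0 then 0 else c4)" for x :: nat
  have I1_0: "0 \<le> I1 x" for x using w0[of x] u0 by (simp add: I1_def)
  have I2_0: "0 \<le> I2 x" for x using w0[of x] by (simp add: I2_def less_imp_le)
  have I3_0: "0 \<le> I3 x" for x by (simp add: I3_def)
  have I4_0: "0 \<le> I4 x" for x using m1 by (simp add: I4_def c4_def)
  have pt: "(if t < \<bar>T x\<bar> then ?w x else 0) \<le> I1 x + I2 x + I3 x + I4 x" if x: "x \<le> \<tau>" for x
  proof (cases "t < \<bar>T x\<bar>")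
    case False
    then show ?thesis using I1_0[of x] I2_0[of x] I3_0[of x] I4_0[of x] by simp
  next
    case True
    then have "t < Gb \<tau> d m \<kappa> f x" using P1[OF x] P2[OF x] by simp
    then have "t < \<bar>f x\<bar> + A + (if x = 0 then L else 0) + (if x \<noteq> 0 \<and> \<kappa> < d then \<bar>f 0\<bar> / (1 + m) else 0)"
      by (simp only: Gb_def A_def L_def)
    then have cases: "t/4 < \<bar>f x\<bar> \<or> t/4 < A \<or> (x = 0 \<and> t/4 < L) \<or> (x \<noteq> 0 \<and> \<kappa> < d \<and> t/4 < \<bar>f 0\<bar> / (1 + m))"
      using four_cases[OF t] by blast
    have "?w x \<le> I1 x + I2 x + I3 x + I4 x"
    proof -
      consider "t/4 < \<bar>f x\<bar>" | "t/4 < A" | "x = 0" "t/4 < L" | "x \<noteq> 0" "\<kappa> < d" "t/4 < \<bar>f 0\<bar> / (1 + m)"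
        using cases by blast
      then show ?thesis
      proof cases
        case 1
        then have "?w x \<le> I1 x" using key1 by (simp add: I1_def mult_ac)
        then show ?thesis using I2_0[of x] I3_0[of x] I4_0[of x] by linarith
      next
        case 2
        then have "?w x \<le> I2 x" by (simp add: I2_def)
        then show ?thesis using I1_0[of x] I3_0[of x] I4_0[of x] by linarith
      next
        case 3
        then have "?w x \<le> I3 x" by (simp add: I3_def Smass_def)
        then show ?thesis using I1_0[of x] I2_0[of x] I4_0[of x] by linarith
      next
        case 4
        then have "?w x \<le> I4 x" by (simp add: I4_def c4_def Smass_def)
        then show ?thesis using I1_0[of x] I2_0[of x] I3_0[of x] by linarith
      qed
    qed
    then show ?thesis using True by simp
  qed
  have meas: "fmeas ?w {x\<in>?S. t < \<bar>T x\<bar>} = (\<Sum>x\<in>?S. if t < \<bar>T x\<bar> then ?w x else 0)"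
    unfolding fmeas_def by (rule sum.inter_filter) simp
  also have "\<dots> \<le> (\<Sum>x\<in>?S. I1 x + I2 x + I3 x + I4 x)"
    by (intro sum_mono pt) auto
  also have "\<dots> = sum I1 ?S + sum I2 ?S + sum I3 ?S + sum I4 ?S"
    by (simp add: sum.distrib)
  also have "\<dots> \<le> u powr r * N + u powr r * N + u powr r * N + u powr r * N * Y"
  proof (intro add_mono)
    show "sum I1 ?S \<le> u powr r * N"
      by (simp add: I1_def N_def sum_distrib_left mult_ac)
  next
    have "sum I2 ?S = (if t/4 < A then fmeas ?w ?S else 0)"
      by (simp add: I2_def fmeas_def)
    also have "\<dots> \<le> u powr r * N"
    proof (cases "t/4 < A")
      case False then show ?thesis using N0 u0 by simp
    next
      case True
      have Mpos: "0 < fmeas ?w ?S" using fmeas_pos[OF m1, of ?S] by simp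
      have e2: "2 * (1/u) = t/4" by (simp add: u_def)
      have "t/4 * fmeas ?w ?S < (\<Sum>x\<in>?S. \<bar>f x\<bar> * ?w x)"
        using True Mpos unfolding A_def Av_def by (simp only: less_divide_eq)
      then have "2 * (1/u) * fmeas ?w ?S < (\<Sum>x\<in>?S. \<bar>f x\<bar> * ?w x)"
        unfolding e2 .
      then have "(\<Sum>x\<in>?S. ?w x) \<le> (1/(1/u)) powr r * (\<Sum>x\<in>?S. \<bar>f x\<bar> powr r * ?w x)"
        using u0 w0 r1 by (intro split_trick) (auto simp: fmeas_def less_imp_le)
      then show ?thesis using True u0 by (simp add: fmeas_def N_def)
    qed
    finally show "sum I2 ?S \<le> u powr r * N" .
  next
    have "sum I3 ?S = (if t/4 < L then 1 else 0)" by (simp add: I3_def)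
    also have "\<dots> \<le> u powr r * N"
    proof (cases "t/4 < L")
      case False then show ?thesis using N0 u0 by simp
    next
      case True
      then obtain z where z: "z \<le> \<tau>" "t/4 < \<bar>f z\<bar>"
        unfolding L_def linf_norm_def by (subst (asm) Max_gr_iff) auto
      have "1 \<le> ?w z" using m1 by (rule Smass_ge1)
      also have "\<dots> \<le> u powr r * (\<bar>f z\<bar> powr r * ?w z)" using key1 z by simp
      also have "\<dots> \<le> u powr r * N" using Nge[OF z(1)] u0 by (intro mult_left_mono) auto
      finally show ?thesis using True by simp
    qed
    finally show "sum I3 ?S \<le> u powr r * N" .
  next
    have "sum I4 ?S = I4 0 + sum I4 {Suc 0..\<tau>}" by (simp add: sum.atLeast_Suc_atMost)
    also have "\<dots> = real \<tau> * c4" by (simp add: I4_def)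
    also have "\<dots> \<le> u powr r * N * Y"
    proof (cases "\<kappa> < d \<and> t/4 < \<bar>f 0\<bar>/(1+m)")
      case False
      have "c4 = 0" unfolding c4_def using False by (rule if_not_P)
      then show ?thesis using N0 u0 Y0 by simp
    next
      case True
      have m0: "0 < m" using m1 by simp
      have "\<bar>f 0\<bar>/(1+m) \<le> \<bar>f 0\<bar>/m" using m1 by (intro divide_left_mono) auto
      then have "t/4 < \<bar>f 0\<bar>/m" using True by linarith
      then have "u * (t/4) < u * (\<bar>f 0\<bar>/m)" using u0 by (rule mult_strict_left_mono)
      then have "1 \<le> u * (\<bar>f 0\<bar> / m)" using ut by linarith
      then have "1 \<le> (u * (\<bar>f 0\<bar> / m)) powr r" using r1 by (intro ge_one_powr_ge_zero) auto
      also have "\<dots> = u powr r * \<bar>f 0\<bar> powr r / m powr r" using u0 m0 by (simp add: powr_mult powr_divide)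
      finally have "m * 1 \<le> m * (u powr r * \<bar>f 0\<bar> powr r / m powr r)" using m0 by (intro mult_left_mono) auto
      also have "\<dots> = u powr r * \<bar>f 0\<bar> powr r * (m powr 1 / m powr r)" using m0 by simp
      also have "\<dots> = u powr r * \<bar>f 0\<bar> powr r * m powr (1 - r)" by (simp add: powr_diff)
      also have "\<dots> \<le> u powr r * N * m powr (1 - r)"
        using Nge[of 0] u0 by (intro mult_right_mono mult_left_mono) (auto simp: Smass_def)
      finally have "m \<le> u powr r * N * m powr (1 - r)" by simp
      then have "real \<tau> * m \<le> real \<tau> * (u powr r * N * m powr (1 - r))" by (intro mult_left_mono) auto
      then show ?thesis using True by (simp add: c4_def Y_def mult_ac)
    qed
    finally show "sum I4 ?S \<le> u powr r * N * Y" .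
  qed
  also have "\<dots> = u powr r * N * (3 + Y)" by (simp add: algebra_simps)
  finally have mu: "fmeas ?w {x\<in>?S. t < \<bar>T x\<bar>} \<le> u powr r * N * (3 + Y)" .
  have mu0: "0 \<le> fmeas ?w {x\<in>?S. t < \<bar>T x\<bar>}"
    unfolding fmeas_def using w0 by (intro sum_nonneg) (auto simp: less_imp_le)
  have e0: "0 \<le> 1/r" using r1 by simp
  have "fmeas ?w {x\<in>?S. t < \<bar>T x\<bar>} powr (1/r) \<le> (u powr r * N * (3 + Y)) powr (1/r)"
    using mu mu0 e0 by (intro powr_mono2) auto
  also have "\<dots> = (u powr r) powr (1/r) * N powr (1/r) * (3 + Y) powr (1/r)"
    using u0 N0 Y0 by (simp add: powr_mult)
  also have "(u powr r) powr (1/r) = u" using u0 r1 by (simp add: powr_powr)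
  finally have a: "t * fmeas ?w {x\<in>?S. t < \<bar>T x\<bar>} powr (1/r) \<le> t * (u * N powr (1/r) * (3 + Y) powr (1/r))"
    using t by (intro mult_left_mono) auto
  have "t * (u * N powr (1/r) * (3 + Y) powr (1/r)) = 8 * N powr (1/r) * (3 + Y) powr (1/r)"
    using t by (simp add: u_def)
  also have "\<dots> \<le> 8 * N powr (1/r) * (4 * Sbound \<tau> d m \<kappa> (ereal r))"
    using Sb_bound[OF r1 m1, of \<kappa> d \<tau>] by (intro mult_left_mono) (auto simp: Y_def)
  finally have b: "t * (u * N powr (1/r) * (3 + Y) powr (1/r)) \<le> 8 * N powr (1/r) * (4 * Sbound \<tau> d m \<kappa> (ereal r))" .
  have lpN: "N powr (1/r) = lp_norm ?S ?w r f" by (simp add: lp_norm_def N_def)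
  have "8 * N powr (1/r) * (4 * Sbound \<tau> d m \<kappa> (ereal r)) = 32 * Sbound \<tau> d m \<kappa> (ereal r) * lp_norm ?S ?w r f"
    unfolding lpN by simp
  then show ?thesis using a b by linarith
qed


lemma fmeas_S: "fmeas (Smass m) {0..\<tau>} = 1 + real \<tau> * m"
proof -
  have "fmeas (Smass m) {0..\<tau>} = Smass m 0 + (\<Sum>x\<in>{Suc 0..\<tau>}. Smass m x)"
    by (simp add: fmeas_def sum.atLeast_Suc_atMost)
  also have "(\<Sum>x\<in>{Suc 0..\<tau>}. Smass m x) = (\<Sum>x\<in>{Suc 0..\<tau>}. m)"
    by (rule sum.cong) (auto simp: Smass_def)
  moreover have "Smass m 0 = 1" by (simp add: Smass_def)
  ultimately show ?thesis by simp
qed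

definition delta0 :: "nat \<Rightarrow> real" where "delta0 x = (if x = 0 then 1 else 0)"

lemma lp_delta: assumes "1 \<le> r" shows "lp_norm {0..\<tau>} (Smass m) r delta0 = 1"
proof -
  have "(\<Sum>x\<in>{0..\<tau>}. \<bar>delta0 x\<bar> powr r * Smass m x)
      = \<bar>delta0 0\<bar> powr r * Smass m 0 + (\<Sum>x\<in>{Suc 0..\<tau>}. \<bar>delta0 x\<bar> powr r * Smass m x)"
    by (simp add: sum.atLeast_Suc_atMost)
  also have "(\<Sum>x\<in>{Suc 0..\<tau>}. \<bar>delta0 x\<bar> powr r * Smass m x) = (\<Sum>x\<in>{Suc 0..\<tau>}. 0)"
    by (rule sum.cong) (auto simp: delta0_def)
  finally show ?thesis by (simp add: lp_norm_def delta0_def Smass_def)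
qed

lemma linf_delta: "linf_norm {0..\<tau>} delta0 = 1"
proof (rule antisym)
  show "linf_norm {0..\<tau>} delta0 \<le> 1" unfolding linf_norm_def
    by (rule Max.boundedI) (auto simp: delta0_def)
  show "1 \<le> linf_norm {0..\<tau>} delta0" using linf_ge[of 0 \<tau> delta0] by (simp add: delta0_def)
qed

lemma avg_delta_0:
  assumes m1: "1 \<le> m" and d1: "1 < d" and k1: "1 \<le> \<kappa>"
  shows "ball_avg {0..\<tau>} (Sdist d) (Smass m) \<kappa> delta0 0 (1/\<kappa>) = 1"
proof -
  have k0: "0 < \<kappa>" using k1 by simp
  have b1: "fball {0..\<tau>} (Sdist d) 0 (1/\<kappa>) = {0}" using ball_eq[of 0 \<tau> "1/\<kappa>" d] k1 d1 by simp
  have b2: "fball {0..\<tau>} (Sdist d) 0 (\<kappa> * (1/\<kappa>)) = {0}" using ball_eq[of 0 \<tau> 1 d] k0 d1 by simp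
  show ?thesis unfolding ball_avg_def b1 b2 by (simp add: fmeas_def delta0_def Smass_def)
qed

lemma avg_delta_x:
  assumes m1: "1 \<le> m" and d1: "1 < d" and k1: "1 \<le> \<kappa>" and kd: "\<kappa> < d" and x: "x \<le> \<tau>" "x \<noteq> 0"
  shows "ball_avg {0..\<tau>} (Sdist d) (Smass m) \<kappa> delta0 x (d/\<kappa>) = 1/(1+m)"
proof -
  have k0: "0 < \<kappa>" using k1 by simp
  have s1: "\<not> d/\<kappa> \<le> 1" using kd k0 by (simp add: le_divide_eq)
  have "d/\<kappa> \<le> d/1" by (rule divide_left_mono) (use k1 d1 in auto)
  then have s2: "\<not> d < d/\<kappa>" by simp
  have s0: "0 < d/\<kappa>" using k0 d1 by simp
  have b1: "fball {0..\<tau>} (Sdist d) x (d/\<kappa>) = {0, x}" using ball_eq[OF x(1) s0 d1] s1 s2 x by simp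
  have b2: "fball {0..\<tau>} (Sdist d) x (\<kappa> * (d/\<kappa>)) = {0, x}" using ball_eq[of x \<tau> d d] x d1 k0 by simp
  show ?thesis unfolding ball_avg_def b1 b2 using x by (simp add: fmeas_def delta0_def Smass_def)
qed

lemma Sb_ge1: "1 \<le> Sbound \<tau> d m \<kappa> p" by (simp add: Sbound_def)

lemma bc_finite:
  fixes T :: "(nat \<Rightarrow> real) \<Rightarrow> nat \<Rightarrow> real"
  assumes tau: "1 \<le> \<tau>" and m1: "1 \<le> m" and d1: "1 < d" and k1: "1 \<le> \<kappa>" and r1: "1 \<le> r"
    and P1: "\<And>f x s. x \<le> \<tau> \<Longrightarrow> 0 < s \<Longrightarrow> ball_avg {0..\<tau>} (Sdist d) (Smass m) \<kappa> f x s \<le> T f x"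
    and P2: "\<And>f x. x \<le> \<tau> \<Longrightarrow> T f x \<le> Gb \<tau> d m \<kappa> f x"
  shows "best_const {0..\<tau>} (Smass m) T (ereal r) \<le> 32 * Sbound \<tau> d m \<kappa> (ereal r)
       \<and> Sbound \<tau> d m \<kappa> (ereal r) \<le> 32 * best_const {0..\<tau>} (Smass m) T (ereal r)"
proof -
  let ?S = "{0..\<tau>}" let ?w = "Smass m"
  define K where "K = 32 * Sbound \<tau> d m \<kappa> (ereal r)"
  have K0: "0 \<le> K" using Sb_ge1[of \<tau> d m \<kappa> "ereal r"] by (simp add: K_def)
  have T0: "0 \<le> T f x" if "x \<le> \<tau>" for f x
    using P1[OF that, of 1 f] ball_avg_nonneg[OF m1] by (meson order_trans zero_less_one)
  have wt: "t * fmeas ?w {x\<in>?S. t < \<bar>T f x\<bar>} powr (1/r) \<le> K * lp_norm ?S ?w r f" if "0 < t" for f t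
    unfolding K_def
    by (rule weak_t[OF tau m1 d1 k1 r1 that]) (use T0 P2 in auto)
  have weak_le: "weak_norm ?S ?w r (T f) \<le> K * lp_norm ?S ?w r f" for f
    unfolding weak_norm_def by (rule cSUP_least) (use wt in auto)
  have weak_ge: "t * fmeas ?w {x\<in>?S. t < \<bar>T f x\<bar>} powr (1/r) \<le> weak_norm ?S ?w r (T f)" if "0 < t" for f t
    unfolding weak_norm_def
    by (rule cSUP_upper) (use that in simp, rule bdd_aboveI2, use wt in auto)
  define Cs where "Cs = {C. 0 \<le> C \<and> (\<forall>f. weak_norm ?S ?w r (T f) \<le> C * lp_norm ?S ?w r f)}"
  have bc: "best_const ?S ?w T (ereal r) = Inf Cs" by (simp add: best_const_def Cs_def)
  have KC: "K \<in> Cs" using K0 weak_le by (simp add: Cs_def)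
  have up: "Inf Cs \<le> K" by (rule cInf_lower[OF KC]) (auto simp: Cs_def bdd_below_def)
  have low: "Sbound \<tau> d m \<kappa> (ereal r) \<le> 32 * C" if C: "C \<in> Cs" for C
  proof -
    have "\<forall>f. weak_norm ?S ?w r (T f) \<le> C * lp_norm ?S ?w r f" using C by (simp add: Cs_def)
    then have "weak_norm ?S ?w r (T delta0) \<le> C * lp_norm ?S ?w r delta0" by blast
    then have wC: "weak_norm ?S ?w r (T delta0) \<le> C" using lp_delta[OF r1, of \<tau> m] by simp
    have k0: "0 < \<kappa>" using k1 by simp
    have T00: "1 \<le> T delta0 0" using P1[of 0 "1/\<kappa>" delta0] avg_delta_0[OF m1 d1 k1, of \<tau>] k0 by simp
    have A: "1/2 \<le> C"
    proof -
      have "{0} \<subseteq> {x\<in>?S. 1/2 < \<bar>T delta0 x\<bar>}" using T00 by auto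
      then have "fmeas ?w {0} \<le> fmeas ?w {x\<in>?S. 1/2 < \<bar>T delta0 x\<bar>}"
        by (intro fmeas_mono m1) auto
      then have "1 \<le> fmeas ?w {x\<in>?S. 1/2 < \<bar>T delta0 x\<bar>}" by (simp add: fmeas_def Smass_def)
      then have "1 \<le> fmeas ?w {x\<in>?S. 1/2 < \<bar>T delta0 x\<bar>} powr (1/r)"
        using r1 by (intro ge_one_powr_ge_zero) auto
      then have "1/2 \<le> 1/2 * fmeas ?w {x\<in>?S. 1/2 < \<bar>T delta0 x\<bar>} powr (1/r)" by simp
      also have "\<dots> \<le> weak_norm ?S ?w r (T delta0)" by (rule weak_ge) simp
      finally show ?thesis using wC by simp
    qed
    show ?thesis
    proof (cases "d \<le> \<kappa>")
      case True then show ?thesis using A by (simp add: Sbound_def)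
    next
      case False
      then have kd: "\<kappa> < d" by simp
      have m0: "0 < m" using m1 by simp
      define t0 where "t0 = 1/(2*(1+m))"
      have t00: "0 < t0" using m1 by (simp add: t0_def)
      have all: "{x\<in>?S. t0 < \<bar>T delta0 x\<bar>} = ?S"
      proof -
        have "t0 < \<bar>T delta0 x\<bar>" if x: "x \<le> \<tau>" for x
        proof (cases "x = 0")
          case True
          have "t0 < 1" using m1 by (simp add: t0_def)
          then show ?thesis using T00 True by simp
        next
          case False
          have s0: "0 < d/\<kappa>" using k0 d1 by simp
          have "1/(1+m) \<le> T delta0 x" using P1[OF x s0, of delta0] avg_delta_x[OF m1 d1 k1 kd x False] by simp
          moreover have "t0 < 1/(1+m)" using m1 by (simp add: t0_def field_simps)
          ultimately show ?thesis by simp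
        qed
        then show ?thesis by auto
      qed
      have "real \<tau> * m \<le> fmeas ?w ?S" by (simp add: fmeas_S)
      then have "(real \<tau> * m) powr (1/r) \<le> fmeas ?w ?S powr (1/r)"
        using r1 m1 by (intro powr_mono2) auto
      then have "t0 * (real \<tau> * m) powr (1/r) \<le> t0 * fmeas ?w ?S powr (1/r)"
        using t00 by (intro mult_left_mono) auto
      also have "\<dots> \<le> weak_norm ?S ?w r (T delta0)" using weak_ge[OF t00, of delta0] all by simp
      finally have B1: "t0 * (real \<tau> * m) powr (1/r) \<le> C" using wC by simp
      have "real \<tau> powr (1/r) * m powr (1/r - 1) = (real \<tau> * m) powr (1/r) / m"
        using m0 by (simp add: powr_mult powr_diff)
      also have "\<dots> \<le> 4 * (t0 * (real \<tau> * m) powr (1/r))"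
      proof -
        have q0: "0 \<le> (real \<tau> * m) powr (1/r)" by simp
        have "1 / m \<le> 4 * t0" using m1 by (simp add: t0_def field_simps)
        then have "(real \<tau> * m) powr (1/r) * (1/m) \<le> (real \<tau> * m) powr (1/r) * (4 * t0)"
          using q0 by (intro mult_left_mono) auto
        then show ?thesis by (simp add: mult_ac)
      qed
      finally have "real \<tau> powr (1/r) * m powr (1/r - 1) \<le> 4 * C" using B1 by linarith
      then show ?thesis using A kd by (simp add: Sbound_def)
    qed
  qed
  have "Sbound \<tau> d m \<kappa> (ereal r) / 32 \<le> Inf Cs"
  proof (rule cInf_greatest)
    show "Cs \<noteq> {}" using KC by auto
    fix C assume "C \<in> Cs"
    then show "Sbound \<tau> d m \<kappa> (ereal r) / 32 \<le> C" using low by fastforce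
  qed
  then show ?thesis using up bc K_def by simp
qed

lemma bc_inf:
  fixes T :: "(nat \<Rightarrow> real) \<Rightarrow> nat \<Rightarrow> real"
  assumes m1: "1 \<le> m" and d1: "1 < d" and k1: "1 \<le> \<kappa>"
    and P1: "\<And>f x s. x \<le> \<tau> \<Longrightarrow> 0 < s \<Longrightarrow> ball_avg {0..\<tau>} (Sdist d) (Smass m) \<kappa> f x s \<le> T f x"
    and P2: "\<And>f x. x \<le> \<tau> \<Longrightarrow> T f x \<le> Gb \<tau> d m \<kappa> f x"
  shows "best_const {0..\<tau>} (Smass m) T \<infinity> \<le> 32 * Sbound \<tau> d m \<kappa> \<infinity>
       \<and> Sbound \<tau> d m \<kappa> \<infinity> \<le> 32 * best_const {0..\<tau>} (Smass m) T \<infinity>"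
proof -
  let ?S = "{0..\<tau>}" let ?w = "Smass m"
  have T0: "0 \<le> T f x" if "x \<le> \<tau>" for f x
    using P1[OF that, of 1 f] ball_avg_nonneg[OF m1] by (meson order_trans zero_less_one)
  define Cs where "Cs = {C. 0 \<le> C \<and> (\<forall>f. linf_norm ?S (T f) \<le> C * linf_norm ?S f)}"
  have bc: "best_const ?S ?w T \<infinity> = Inf Cs" by (simp add: best_const_def Cs_def)
  have KC: "4 \<in> Cs"
  proof -
    have "linf_norm ?S (T f) \<le> 4 * linf_norm ?S f" for f
    proof -
      let ?L = "linf_norm ?S f"
      have Mp: "0 < fmeas ?w ?S" using fmeas_pos[OF m1, of ?S] by simp
      have "(\<Sum>z\<in>?S. \<bar>f z\<bar> * ?w z) \<le> (\<Sum>z\<in>?S. ?L * ?w z)"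
        using linf_ge[of _ \<tau> f] m1 by (intro sum_mono mult_right_mono) (auto simp: Smass_def)
      also have "\<dots> = ?L * fmeas ?w ?S" by (simp add: fmeas_def sum_distrib_left)
      finally have AL: "Av \<tau> m f \<le> ?L" unfolding Av_def using Mp by (simp add: divide_le_eq)
      have f0: "\<bar>f 0\<bar> / (1+m) \<le> \<bar>f 0\<bar>" using m1 by (simp add: divide_le_eq) (smt (verit) abs_ge_zero mult_le_cancel_left1)
      have "\<bar>T f x\<bar> \<le> 4 * ?L" if x: "x \<le> \<tau>" for x
      proof -
        have "\<bar>T f x\<bar> = T f x" using T0[OF x] by simp
        also have "\<dots> \<le> Gb \<tau> d m \<kappa> f x" by (rule P2[OF x])
        also have "\<dots> \<le> 4 * ?L"
          using linf_ge[OF x, of f] linf_ge[of 0 \<tau> f] AL f0 linf_nonneg[of \<tau> f]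
          unfolding Gb_def by (auto split: if_splits)
        finally show ?thesis .
      qed
      then show ?thesis unfolding linf_norm_def[of _ "T f"]
        by (intro Max.boundedI) auto
    qed
    then show ?thesis by (simp add: Cs_def)
  qed
  have up: "Inf Cs \<le> 4" by (rule cInf_lower[OF KC]) (auto simp: Cs_def bdd_below_def)
  have low: "1 \<le> C" if C: "C \<in> Cs" for C
  proof -
    have k0: "0 < \<kappa>" using k1 by simp
    have T00: "1 \<le> T delta0 0" using P1[of 0 "1/\<kappa>" delta0] avg_delta_0[OF m1 d1 k1, of \<tau>] k0 by simp
    have "\<bar>T delta0 0\<bar> \<le> linf_norm ?S (T delta0)" by (rule linf_ge) simp
    also have "\<dots> \<le> C"
    proof -
      have "\<forall>f. linf_norm ?S (T f) \<le> C * linf_norm ?S f" using C by (simp add: Cs_def)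
      then have "linf_norm ?S (T delta0) \<le> C * linf_norm ?S delta0" by blast
      then show ?thesis using linf_delta[of \<tau>] by simp
    qed
    finally show ?thesis using T00 by simp
  qed
  have "1 \<le> Inf Cs" by (rule cInf_greatest) (use KC low in auto)
  then show ?thesis using up bc by (simp add: Sbound_def)
qed


theorem lemma3p3p2:
  fixes p :: ereal
  assumes "1 \<le> p"
  shows "\<exists>C>0. \<forall>(\<tau>::nat) (d::real) (m::real) (\<kappa>::real).
           1 \<le> \<tau> \<longrightarrow> 1 < d \<longrightarrow> d \<le> 2 \<longrightarrow> 1 \<le> m \<longrightarrow> 1 \<le> \<kappa> \<longrightarrow>
             Sc \<tau> d m \<kappa> p \<le> C * Sbound \<tau> d m \<kappa> p \<and> Sbound \<tau> d m \<kappa> p \<le> C * Sc \<tau> d m \<kappa> p \<and>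
             Scc \<tau> d m \<kappa> p \<le> C * Sbound \<tau> d m \<kappa> p \<and> Sbound \<tau> d m \<kappa> p \<le> C * Scc \<tau> d m \<kappa> p"
proof (intro exI[of _ 32] conjI allI impI)
  fix \<tau> :: nat and d m \<kappa> :: real
  assume tau: "1 \<le> \<tau>" and d1: "1 < d" and "d \<le> 2" and m1: "1 \<le> m" and k1: "1 \<le> \<kappa>"
  have U1: "\<And>f x s. x \<le> \<tau> \<Longrightarrow> 0 < s \<Longrightarrow> ball_avg {0..\<tau>} (Sdist d) (Smass m) \<kappa> f x s
      \<le> umax {0..\<tau>} (Sdist d) (Smass m) \<kappa> f x"
    using umax_ge[OF m1 d1 k1] by blast
  have U2: "\<And>f x. x \<le> \<tau> \<Longrightarrow> umax {0..\<tau>} (Sdist d) (Smass m) \<kappa> f x \<le> Gb \<tau> d m \<kappa> f x"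
    using umax_le[OF m1 d1 k1] by blast
  have C1: "\<And>f x s. x \<le> \<tau> \<Longrightarrow> 0 < s \<Longrightarrow> ball_avg {0..\<tau>} (Sdist d) (Smass m) \<kappa> f x s
      \<le> cmax {0..\<tau>} (Sdist d) (Smass m) \<kappa> f x"
    using cmax_ge[OF m1 d1 k1] by blast
  have C2: "\<And>f x. x \<le> \<tau> \<Longrightarrow> cmax {0..\<tau>} (Sdist d) (Smass m) \<kappa> f x \<le> Gb \<tau> d m \<kappa> f x"
    using cmax_le[OF m1 d1 k1] by blast
  have "(Sc \<tau> d m \<kappa> p \<le> 32 * Sbound \<tau> d m \<kappa> p \<and> Sbound \<tau> d m \<kappa> p \<le> 32 * Sc \<tau> d m \<kappa> p) \<and>
        (Scc \<tau> d m \<kappa> p \<le> 32 * Sbound \<tau> d m \<kappa> p \<and> Sbound \<tau> d m \<kappa> p \<le> 32 * Scc \<tau> d m \<kappa> p)"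
  proof (cases "p = \<infinity>")
    case True
    then show ?thesis unfolding Sc_def Scc_def
      using bc_inf[OF m1 d1 k1 U1 U2] bc_inf[OF m1 d1 k1 C1 C2] by simp
  next
    case False
    then obtain r where pr: "p = ereal r" using assms by (cases p) auto
    then have r1: "1 \<le> r" using assms by simp
    show ?thesis unfolding Sc_def Scc_def pr
      using bc_finite[OF tau m1 d1 k1 r1 U1 U2] bc_finite[OF tau m1 d1 k1 r1 C1 C2] by simp
  qed
  then show "Sc \<tau> d m \<kappa> p \<le> 32 * Sbound \<tau> d m \<kappa> p" "Sbound \<tau> d m \<kappa> p \<le> 32 * Sc \<tau> d m \<kappa> p"
    "Scc \<tau> d m \<kappa> p \<le> 32 * Sbound \<tau> d m \<kappa> p" "Sbound \<tau> d m \<kappa> p \<le> 32 * Scc \<tau> d m \<kappa> p" by auto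
qed simp

end
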